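(* Let $(\mathfrak g,[-,-])$ be a Lie algebra and $(\rho,V)$ a representation. Every invertible anti-$\mathcal O$-operator $T:V\to\mathfrak g$ of $(\mathfrak g,[-,-])$ associated to $(\rho,V)$ is strong.
   Context: All vector spaces are finite-dimensional over a field $\mathbb F$ of characteristic $0$. A linear map $T:V\to\mathfrak g$ is an anti-$\mathcal O$-operator associated to a representation $(\rho,V)$ if $[T(u),T(v)]=T(\rho(T(v))u-\rho(T(u))v)$ for all $u,v\in V$; it is strong if moreover $\rho([T(u),T(v)])w+\rho([T(v),T(w)])u+\rho([T(w),T(u)])v=0$ for all $u,v,w\in V$. *)

theory Defs
  imports Complex_Main
begin

definition fin_dim_vs :: "('k::field \<Rightarrow> 'a::ab_group_add \<Rightarrow> 'a) \<Rightarrow> bool" where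
  "fin_dim_vs s \<longleftrightarrow> (\<exists>B. finite_dimensional_vector_space s B)"

definition lie_algebra ::
  "('k::field \<Rightarrow> 'g::ab_group_add \<Rightarrow> 'g) \<Rightarrow> ('g \<Rightarrow> 'g \<Rightarrow> 'g) \<Rightarrow> bool" where
  "lie_algebra sg br \<longleftrightarrow>
     vector_space sg \<and>
     (\<forall>x. Vector_Spaces.linear sg sg (br x)) \<and>
     (\<forall>y. Vector_Spaces.linear sg sg (\<lambda>x. br x y)) \<and>
     (\<forall>x. br x x = 0) \<and>
     (\<forall>x y z. br x (br y z) + br y (br z x) + br z (br x y) = 0)"

definition lie_rep ::
  "('k::field \<Rightarrow> 'g::ab_group_add \<Rightarrow> 'g) \<Rightarrow> ('g \<Rightarrow> 'g \<Rightarrow> 'g) \<Rightarrow>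
   ('k \<Rightarrow> 'v::ab_group_add \<Rightarrow> 'v) \<Rightarrow> ('g \<Rightarrow> 'v \<Rightarrow> 'v) \<Rightarrow> bool" where
  "lie_rep sg br sv rho \<longleftrightarrow>
     vector_space sv \<and>
     (\<forall>x. Vector_Spaces.linear sv sv (rho x)) \<and>
     (\<forall>v. Vector_Spaces.linear sg sv (\<lambda>x. rho x v)) \<and>
     (\<forall>x y v. rho (br x y) v = rho x (rho y v) - rho y (rho x v))"

definition anti_O_operator ::
  "('k::field \<Rightarrow> 'g::ab_group_add \<Rightarrow> 'g) \<Rightarrow> ('g \<Rightarrow> 'g \<Rightarrow> 'g) \<Rightarrow>
   ('k \<Rightarrow> 'v::ab_group_add \<Rightarrow> 'v) \<Rightarrow> ('g \<Rightarrow> 'v \<Rightarrow> 'v) \<Rightarrow> ('v \<Rightarrow> 'g) \<Rightarrow> bool" where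
  "anti_O_operator sg br sv rho T \<longleftrightarrow>
     Vector_Spaces.linear sv sg T \<and>
     (\<forall>u v. br (T u) (T v) = T (rho (T v) u - rho (T u) v))"

definition strong_anti_O_operator ::
  "('k::field \<Rightarrow> 'g::ab_group_add \<Rightarrow> 'g) \<Rightarrow> ('g \<Rightarrow> 'g \<Rightarrow> 'g) \<Rightarrow>
   ('k \<Rightarrow> 'v::ab_group_add \<Rightarrow> 'v) \<Rightarrow> ('g \<Rightarrow> 'v \<Rightarrow> 'v) \<Rightarrow> ('v \<Rightarrow> 'g) \<Rightarrow> bool" where
  "strong_anti_O_operator sg br sv rho T \<longleftrightarrow>
     anti_O_operator sg br sv rho T \<and>
     (\<forall>u v w. rho (br (T u) (T v)) w + rho (br (T v) (T w)) u + rho (br (T w) (T u)) v = 0)"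

end

theory Submission
  imports Defs
begin

lemma lin_facts:
  assumes "Vector_Spaces.linear s1 s2 f"
  shows "f (a + b) = f a + f b" "f (a - b) = f a - f b" "f 0 = 0"
  using assms unfolding Vector_Spaces.linear_def
  by (auto simp: module_hom.add module_hom.diff module_hom.zero)

theorem proposition2p17:
  fixes sg :: "'k::field_char_0 \<Rightarrow> 'g::ab_group_add \<Rightarrow> 'g"
    and br :: "'g \<Rightarrow> 'g \<Rightarrow> 'g"
    and sv :: "'k \<Rightarrow> 'v::ab_group_add \<Rightarrow> 'v"
    and rho :: "'g \<Rightarrow> 'v \<Rightarrow> 'v"
    and T :: "'v \<Rightarrow> 'g"
  assumes "fin_dim_vs sg" and "fin_dim_vs sv"
    and "lie_algebra sg br"
    and "lie_rep sg br sv rho"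
    and "anti_O_operator sg br sv rho T"
    and "bij T"
  shows "strong_anti_O_operator sg br sv rho T"
proof -
  have jac: "\<And>x y z. br x (br y z) + br y (br z x) + br z (br x y) = 0"
    using assms(3) by (simp add: lie_algebra_def)
  have vs: "vector_space sv" and rl: "\<And>x. Vector_Spaces.linear sv sv (rho x)"
    and rep: "\<And>x y v. rho (br x y) v = rho x (rho y v) - rho y (rho x v)"
    using assms(4) by (auto simp: lie_rep_def)
  have Tl: "Vector_Spaces.linear sv sg T"
    and aO: "\<And>u v. br (T u) (T v) = T (rho (T v) u - rho (T u) v)"
    using assms(5) by (auto simp: anti_O_operator_def)
  have inj: "inj T" using assms(6) bij_is_inj by blast
  note rd = lin_facts(2)[OF rl]
  note Ta = lin_facts(1)[OF Tl]
  have "\<forall>u v w. rho (br (T u) (T v)) w + rho (br (T v) (T w)) u + rho (br (T w) (T u)) v = 0"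
  proof (intro allI)
    fix u v w
    define x where "x = T u"
    define y where "y = T v"
    define z where "z = T w"
    define G where "G = rho (br x y) w + rho (br y z) u + rho (br z x) v"
    define p1 where "p1 = rho (br y z) u - rho x (rho z v - rho y w)"
    define p2 where "p2 = rho (br z x) v - rho y (rho x w - rho z u)"
    define p3 where "p3 = rho (br x y) w - rho z (rho y u - rho x v)"
    have e1: "br x (br y z) = T p1"
      unfolding p1_def x_def y_def z_def aO by (simp add: aO[symmetric])
    have e2: "br y (br z x) = T p2"
      unfolding p2_def x_def y_def z_def aO by (simp add: aO[symmetric])
    have e3: "br z (br x y) = T p3"
      unfolding p3_def x_def y_def z_def aO by (simp add: aO[symmetric])
    have "T (p1 + p2 + p3) = T 0"
      using jac[of x y z] unfolding e1 e2 e3 Ta lin_facts(3)[OF Tl] .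
    hence P: "p1 + p2 + p3 = 0" using inj by (simp add: inj_eq)
    have "p1 + p2 + p3 = G + G"
      unfolding p1_def p2_def p3_def G_def rd rep by (simp add: algebra_simps)
    hence GG: "G + G = 0" using P by simp
    have "G + G = sv (1 + 1) G"
      using vector_space.vector_space_assms(2)[OF vs, of 1 1 G] vector_space.vector_space_assms(4)[OF vs, of G] by simp
    hence "sv (1/2) (G + G) = G"
      using vs by (simp add: vector_space.vector_space_assms(3,4))
    moreover have "sv (1/2) 0 = 0"
      using vector_space.vector_space_assms(1)[OF vs, of "1/2" 0 0] by simp
    ultimately have "G = 0" using GG by simp
    thus "rho (br (T u) (T v)) w + rho (br (T v) (T w)) u + rho (br (T w) (T u)) v = 0"
      unfolding G_def x_def y_def z_def .
  qed
  thus ?thesis using assms(5) by (simp add: strong_anti_O_operator_def)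
qed

end
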